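(* Let $\mathbf X=(X_t)_{t\in I}$ be an $N$-MPR process, where $0\in I$. Then $E((X_t-X_s)^n\mid\mathcal F_{\le s})$ is almost surely constant (non-random) for every $0<n\le N$ and all $s<t$ in $I$ if and only if $\mathbf X$ has a structural matrix $V_N(t)=[v_{i,j}(t)]_{i,j=0,\dots,N}$ of the form $$v_{i,j}(t)=\begin{cases}0,& i<j,\\ 1,& i=j,\\ \binom{i}{j}g_{i-j}(t),& i>j,\end{cases}$$ where $g_k$, $k=1,\dots,N$, are continuous functions on $I$ with $g_k(0)=0$.
   Context: $I$ is a segment of the real line. $\mathbf X$ is a real Markov process with all moments finite and infinite support of each $X_t$; $\mathcal F_{\le s}=\sigma(X_v:v\in I,v\le s)$. $N$-TLI: for every $0<n\le N$, $s\ne t$, $[\operatorname{cov}(X_t^i,X_s^j)]_{i,j=1}^n$ is non-singular. $N$-MSC: $EX_t^mX_s^j$ continuous in $(t,s)$ at least on the diagonal for $m,j\le N$. $N$-MPR: Markov, $N$-TLI, $N$-MSC and for $1\le n\le N$, $s\le t$, $E(X_t^n\mid\mathcal F_{\le s})=\sum_{k=0}^n\gamma_{n,k}(s,t)X_s^k$ a.s.; with $\gamma_{0,0}=1$, $\gamma_{i,j}=0$ for $j>i$, $\mathcal A_N(s,t)=[\gamma_{i,j}(s,t)]_{i,j=0}^N$. A structural matrix is any family $\{V_N(t)\}_{t\in I}$ of non-singular lower triangular $(N+1)\times(N+1)$ matrices with $\mathcal A_N(s,u)=V_N(u)V_N^{-1}(s)$ for all $s\le u$ in $I$. *)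

theory Defs
  imports "HOL-Probability.Probability" "Jordan_Normal_Form.Matrix"
begin

definition nat_filt :: "'a measure \<Rightarrow> real set \<Rightarrow> (real \<Rightarrow> 'a \<Rightarrow> real) \<Rightarrow> real \<Rightarrow> 'a measure" where
  "nat_filt M I X s = sigma (space M)
     (\<Union>v\<in>{v\<in>I. v \<le> s}. sets (vimage_algebra (space M) (X v) borel))"

definition gen_alg :: "'a measure \<Rightarrow> (real \<Rightarrow> 'a \<Rightarrow> real) \<Rightarrow> real \<Rightarrow> 'a measure" where
  "gen_alg M X s = vimage_algebra (space M) (X s) borel"

definition std_process :: "'a measure \<Rightarrow> real set \<Rightarrow> (real \<Rightarrow> 'a \<Rightarrow> real) \<Rightarrow> bool" where
  "std_process M I X \<longleftrightarrow> prob_space M \<and> is_interval I \<and>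
     (\<forall>t\<in>I. X t \<in> borel_measurable M) \<and>
     (\<forall>t\<in>I. \<forall>k::nat. integrable M (\<lambda>\<omega>. X t \<omega> ^ k)) \<and>
     (\<forall>t\<in>I. \<not> (\<exists>S. finite S \<and> (AE \<omega> in M. X t \<omega> \<in> S)))"

definition markov :: "'a measure \<Rightarrow> real set \<Rightarrow> (real \<Rightarrow> 'a \<Rightarrow> real) \<Rightarrow> bool" where
  "markov M I X \<longleftrightarrow> (\<forall>s\<in>I. \<forall>t\<in>I. s \<le> t \<longrightarrow>
     (\<forall>f::real \<Rightarrow> real. f \<in> borel_measurable borel \<and> bounded (range f) \<longrightarrow>
       (AE \<omega> in M. real_cond_exp M (nat_filt M I X s) (\<lambda>\<omega>. f (X t \<omega>)) \<omega>
                   = real_cond_exp M (gen_alg M X s) (\<lambda>\<omega>. f (X t \<omega>)) \<omega>)))"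

definition covar :: "'a measure \<Rightarrow> ('a \<Rightarrow> real) \<Rightarrow> ('a \<Rightarrow> real) \<Rightarrow> real" where
  "covar M Y Z = (\<integral>\<omega>. Y \<omega> * Z \<omega> \<partial>M) - (\<integral>\<omega>. Y \<omega> \<partial>M) * (\<integral>\<omega>. Z \<omega> \<partial>M)"

text \<open>N-TLI: the n x n matrix [cov(X_t^i, X_s^j)]_{i,j=1..n} is non-singular (index shift by 1).\<close>
definition TLI :: "nat \<Rightarrow> 'a measure \<Rightarrow> real set \<Rightarrow> (real \<Rightarrow> 'a \<Rightarrow> real) \<Rightarrow> bool" where
  "TLI N M I X \<longleftrightarrow> (\<forall>n. 0 < n \<and> n \<le> N \<longrightarrow> (\<forall>s\<in>I. \<forall>t\<in>I. s \<noteq> t \<longrightarrow>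
     invertible_mat (Matrix.mat n n (\<lambda>(i,j). covar M (\<lambda>\<omega>. X t \<omega> ^ (i+1)) (\<lambda>\<omega>. X s \<omega> ^ (j+1))))))"

definition MSC :: "nat \<Rightarrow> 'a measure \<Rightarrow> real set \<Rightarrow> (real \<Rightarrow> 'a \<Rightarrow> real) \<Rightarrow> bool" where
  "MSC N M I X \<longleftrightarrow> (\<forall>m j. m \<le> N \<and> j \<le> N \<longrightarrow> (\<forall>t\<in>I.
     continuous (at (t,t) within I \<times> I) (\<lambda>(u,v). \<integral>\<omega>. X u \<omega> ^ m * X v \<omega> ^ j \<partial>M)))"

definition MPR :: "nat \<Rightarrow> 'a measure \<Rightarrow> real set \<Rightarrow> (real \<Rightarrow> 'a \<Rightarrow> real)
    \<Rightarrow> (nat \<Rightarrow> nat \<Rightarrow> real \<Rightarrow> real \<Rightarrow> real) \<Rightarrow> bool" where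
  "MPR N M I X gamma \<longleftrightarrow> std_process M I X \<and> markov M I X \<and> TLI N M I X \<and> MSC N M I X \<and>
     (\<forall>n. 1 \<le> n \<and> n \<le> N \<longrightarrow> (\<forall>s\<in>I. \<forall>t\<in>I. s \<le> t \<longrightarrow>
       (AE \<omega> in M. real_cond_exp M (nat_filt M I X s) (\<lambda>\<omega>. X t \<omega> ^ n) \<omega>
          = (\<Sum>k=0..n. gamma n k s t * X s \<omega> ^ k))))"

definition A_mat :: "nat \<Rightarrow> (nat \<Rightarrow> nat \<Rightarrow> real \<Rightarrow> real \<Rightarrow> real) \<Rightarrow> real \<Rightarrow> real \<Rightarrow> real mat" where
  "A_mat N gamma s t = Matrix.mat (N+1) (N+1) (\<lambda>(i,j).
     if j > i then 0 else if i = 0 then 1 else gamma i j s t)"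

definition lower_triangular :: "real mat \<Rightarrow> bool" where
  "lower_triangular A \<longleftrightarrow> (\<forall>i j. i < dim_row A \<and> j < dim_col A \<and> i < j \<longrightarrow> A $$ (i,j) = 0)"

definition structural_matrix :: "nat \<Rightarrow> real set \<Rightarrow> (nat \<Rightarrow> nat \<Rightarrow> real \<Rightarrow> real \<Rightarrow> real)
    \<Rightarrow> (real \<Rightarrow> real mat) \<Rightarrow> bool" where
  "structural_matrix N I gamma V \<longleftrightarrow>
     (\<forall>t\<in>I. V t \<in> carrier_mat (N+1) (N+1) \<and> invertible_mat (V t) \<and> lower_triangular (V t)) \<and>
     (\<forall>s\<in>I. \<forall>u\<in>I. s \<le> u \<longrightarrow> (\<forall>W. inverts_mat (V s) W \<and> inverts_mat W (V s) \<longrightarrow>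
        A_mat N gamma s u = V u * W))"

end

theory Submission
  imports Defs
begin


definition conv :: "(nat \<Rightarrow> real) \<Rightarrow> (nat \<Rightarrow> real) \<Rightarrow> nat \<Rightarrow> real" where
  "conv a b n = (\<Sum>k=0..n. real (n choose k) * a k * b (n - k))"

definition dl :: "nat \<Rightarrow> real" where "dl n = (if n = 0 then 1 else 0)"

definition App :: "nat \<Rightarrow> (nat \<Rightarrow> real) \<Rightarrow> real mat" where
  "App N a = Matrix.mat (N+1) (N+1) (\<lambda>(i,j). if i < j then 0 else real (i choose j) * a (i - j))"

lemma conv_comm: "conv a b n = conv b a n"
proof -
  have "conv a b n = (\<Sum>k=0..n. real (n choose (n - k)) * a (n - k) * b (n - (n - k)))"
    unfolding conv_def by (rule sum.atLeastAtMost_rev[of _ 0 n, simplified])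
  also have "\<dots> = conv b a n" unfolding conv_def
    by (rule sum.cong) (auto simp: binomial_symmetric[symmetric])
  finally show ?thesis .
qed

lemma conv_dl: "conv a dl n = a n"
proof -
  have "conv a dl n = (\<Sum>k\<in>{n}. real (n choose k) * a k * dl (n - k))"
    unfolding conv_def by (rule sum.mono_neutral_right) (auto simp: dl_def)
  then show ?thesis by (simp add: dl_def)
qed

lemma conv_cong: "(\<And>k. k \<le> n \<Longrightarrow> a k = a' k) \<Longrightarrow> (\<And>k. k \<le> n \<Longrightarrow> b k = b' k) \<Longrightarrow> conv a b n = conv a' b' n"
  unfolding conv_def by (intro sum.cong) auto

lemma App_carrier: "App N a \<in> carrier_mat (N+1) (N+1)"
  unfolding App_def by simp

lemma App_mult: "App N a * App N b = App N (conv a b)"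
proof (rule eq_matI)
  fix i j assume i: "i < dim_row (App N (conv a b))" and j: "j < dim_col (App N (conv a b))"
  then have iN: "i \<le> N" and jN: "j \<le> N" by (auto simp: App_def)
  have "(App N a * App N b) $$ (i,j) = (\<Sum>k<N+1. App N a $$ (i,k) * App N b $$ (k,j))"
    using i j by (simp add: App_def scalar_prod_def atLeast0LessThan)
  also have "\<dots> = (\<Sum>k<N+1. (if i < k then 0 else real (i choose k) * a (i - k)) *
        (if k < j then 0 else real (k choose j) * b (k - j)))"
    using iN jN by (intro sum.cong) (auto simp: App_def)
  also have "\<dots> = App N (conv a b) $$ (i,j)"
  proof (cases "i < j")
    case True
    then show ?thesis using iN jN by (auto simp: App_def intro!: sum.neutral)
  next
    case False
    have "(\<Sum>k<N+1. (if i < k then 0 else real (i choose k) * a (i - k)) *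
        (if k < j then 0 else real (k choose j) * b (k - j)))
      = (\<Sum>k=j..i. real (i choose k) * a (i - k) * (real (k choose j) * b (k - j)))"
      using False iN by (intro sum.mono_neutral_cong_right) auto
    also have "\<dots> = (\<Sum>k=j..i. real (i choose j) * (real ((i - j) choose (k - j)) * b (k - j) * a (i - k)))"
    proof (rule sum.cong)
      fix k assume "k \<in> {j..i}"
      then have "(i choose k) * (k choose j) = (i choose j) * ((i - j) choose (k - j))"
        by (intro choose_mult) auto
      then have "real (i choose k) * real (k choose j) = real (i choose j) * real ((i - j) choose (k - j))"
        by (metis of_nat_mult)
      then show "real (i choose k) * a (i - k) * (real (k choose j) * b (k - j)) =
          real (i choose j) * (real ((i - j) choose (k - j)) * b (k - j) * a (i - k))"
        by (metis (no_types, lifting) mult.commute mult.left_commute)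
    qed simp
    also have "\<dots> = real (i choose j) * (\<Sum>k=j..i. real ((i - j) choose (k - j)) * b (k - j) * a (i - k))"
      by (simp add: sum_distrib_left)
    also have "(\<Sum>k=j..i. real ((i - j) choose (k - j)) * b (k - j) * a (i - k))
       = (\<Sum>l=0..i-j. real ((i - j) choose l) * b l * a (i - j - l))"
    proof -
      have "(\<Sum>k=j..i. real ((i - j) choose (k - j)) * b (k - j) * a (i - k))
        = (\<Sum>l=0..i-j. real ((i - j) choose ((l + j) - j)) * b ((l+j) - j) * a (i - (l+j)))"
      proof -
        have e: "{j..i} = {0+j..(i-j)+j}" using False by auto
        show ?thesis unfolding e sum.shift_bounds_cl_nat_ivl by simp
      qed
      also have "\<dots> = (\<Sum>l=0..i-j. real ((i - j) choose l) * b l * a (i - j - l))"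
        by (rule sum.cong) (simp, simp add: diff_diff_left, metis add.commute)
      finally show ?thesis .
    qed
    also have "\<dots> = conv b a (i - j)" unfolding conv_def ..
    finally show ?thesis using False iN jN by (simp add: App_def conv_comm)
  qed
  finally show "(App N a * App N b) $$ (i,j) = App N (conv a b) $$ (i,j)" .
qed (auto simp: App_def)

lemma App_dl: "App N dl = 1\<^sub>m (N+1)"
  by (rule eq_matI) (auto simp: App_def dl_def)

lemma App_00: "n \<le> N \<Longrightarrow> App N a $$ (n, 0) = a n"
  by (simp add: App_def)

lemma conv_assoc: "conv (conv a b) c n = conv a (conv b c) n"
proof -
  have "App n (conv (conv a b) c) = (App n a * App n b) * App n c" by (simp add: App_mult)
  also have "\<dots> = App n a * (App n b * App n c)"
    by (rule assoc_mult_mat[OF App_carrier App_carrier App_carrier])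
  also have "\<dots> = App n (conv a (conv b c))" by (simp add: App_mult)
  finally have eq: "App n (conv (conv a b) c) = App n (conv a (conv b c))" .
  then have "App n (conv (conv a b) c) $$ (n,0) = App n (conv a (conv b c)) $$ (n,0)" by simp
  then show ?thesis by (simp add: App_00)
qed

fun binv :: "(nat \<Rightarrow> real) \<Rightarrow> nat \<Rightarrow> real" where
  "binv a n = (if n = 0 then 1 else - (\<Sum>k<n. real (n choose k) * binv a k * a (n - k)))"

declare binv.simps[simp del]

lemma conv_binv: assumes "a 0 = 1" shows "conv a (binv a) n = dl n"
proof (cases "n = 0")
  case True then show ?thesis using assms by (simp add: conv_def dl_def binv.simps)
next
  case False
  have "conv a (binv a) n = conv (binv a) a n" by (rule conv_comm)
  also have "\<dots> = (\<Sum>k<n. real (n choose k) * binv a k * a (n - k)) + binv a n * a 0"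
    unfolding conv_def by (simp add: atLeast0AtMost lessThan_Suc_atMost[symmetric])
  also have "\<dots> = 0" using assms False by (subst (2) binv.simps) simp
  finally show ?thesis using False by (simp add: dl_def)
qed


lemma conv_binv_l: "a 0 = 1 \<Longrightarrow> conv (binv a) a n = dl n"
  by (simp add: conv_comm[of "binv a"] conv_binv)

lemma conv_dl_l: "conv dl a n = a n"
  by (simp add: conv_comm[of dl] conv_dl)

lemma binv_unique:
  assumes "a 0 = 1" "\<And>k. k \<le> n \<Longrightarrow> conv x a k = dl k"
  shows "x n = binv a n"
proof -
  have "x n = conv x dl n" by (simp add: conv_dl)
  also have "\<dots> = conv x (conv a (binv a)) n"
    by (rule conv_cong) (simp_all add: conv_binv[of a, OF assms(1)])
  also have "\<dots> = conv (conv x a) (binv a) n" by (simp add: conv_assoc)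
  also have "\<dots> = conv dl (binv a) n"
    by (rule conv_cong) (simp_all add: assms(2))
  also have "\<dots> = binv a n" by (rule conv_dl_l)
  finally show ?thesis .
qed

lemma conv_pw_poly: "conv (\<lambda>k. x^k) c n = (\<Sum>j=0..n. (real (n choose j) * c (n-j)) * x^j)"
  unfolding conv_def by (rule sum.cong) auto

lemma binv_0[simp]: "binv a 0 = 1"
  by (simp add: binv.simps)

lemma binv_dl: "binv dl n = dl n"
proof (cases "n = 0")
  case False
  have "(\<Sum>k<n. real (n choose k) * binv dl k * dl (n - k)) = 0"
    by (rule sum.neutral) (auto simp: dl_def)
  then show ?thesis using False by (subst binv.simps) (simp add: dl_def)
qed (simp add: dl_def)

lemma binv_tendsto:
  assumes "\<And>i. i \<le> n \<Longrightarrow> ((\<lambda>t. a t i) \<longlongrightarrow> l i) F"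
  shows "((\<lambda>t. binv (a t) n) \<longlongrightarrow> binv l n) F"
  using assms
proof (induction n rule: less_induct)
  case (less n)
  show ?case
  proof (cases "n = 0")
    case True then show ?thesis by simp
  next
    case False
    have "((\<lambda>t. - (\<Sum>k<n. real (n choose k) * binv (a t) k * a t (n - k))) \<longlongrightarrow>
        - (\<Sum>k<n. real (n choose k) * binv l k * l (n - k))) F"
      using less by (intro tendsto_minus tendsto_sum tendsto_mult tendsto_const) auto
    then show ?thesis using False by (subst (1 2) binv.simps) simp
  qed
qed

lemma conv_tendsto:
  assumes "\<And>i. i \<le> n \<Longrightarrow> ((\<lambda>t. a t i) \<longlongrightarrow> l i) F"
  shows "((\<lambda>t. conv (a t) b n) \<longlongrightarrow> conv l b n) F"
  unfolding conv_def using assms by (intro tendsto_sum tendsto_mult tendsto_const) auto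

lemma App_cong: "(\<And>k. k \<le> N \<Longrightarrow> a k = b k) \<Longrightarrow> App N a = App N b"
  unfolding App_def by (rule cong_mat) auto

lemma App_inverts:
  assumes "a 0 = 1"
  shows "inverts_mat (App N a) (App N (binv a))" "inverts_mat (App N (binv a)) (App N a)"
proof -
  have "App N (conv a (binv a)) = App N dl" by (rule App_cong) (simp add: conv_binv[of a, OF assms])
  then show "inverts_mat (App N a) (App N (binv a))"
    unfolding inverts_mat_def App_mult by (simp add: App_dl, simp add: App_def)
  have "App N (conv (binv a) a) = App N dl" by (rule App_cong) (simp add: conv_binv_l[of a, OF assms])
  then show "inverts_mat (App N (binv a)) (App N a)"
    unfolding inverts_mat_def App_mult by (simp add: App_dl, simp add: App_def)
qed

lemma App_invertible: "a 0 = 1 \<Longrightarrow> invertible_mat (App N a)"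
  unfolding invertible_mat_def using App_inverts[of a N] by (auto simp: App_def square_mat.simps)

lemma App_lower: "lower_triangular (App N a)"
  unfolding lower_triangular_def App_def by simp

lemma App_W:
  assumes "a 0 = 1" "inverts_mat (App N a) W" "inverts_mat W (App N a)"
  shows "W = App N (binv a)"
proof -
  have d1: "dim_row W = N + 1"
    using assms(3) unfolding inverts_mat_def
    by (metis App_carrier carrier_matD(2) index_mult_mat(3) index_one_mat(3))
  have d2: "dim_col W = N + 1"
    using assms(2) unfolding inverts_mat_def
    by (metis App_carrier carrier_matD(1) index_mult_mat(3) index_one_mat(3))
  have W: "W \<in> carrier_mat (N+1) (N+1)" using d1 d2 by auto
  have "W = W * 1\<^sub>m (N+1)" using W by simp
  also have "1\<^sub>m (N+1) = App N a * App N (binv a)"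
    using App_inverts(1)[of a N, OF assms(1)] unfolding inverts_mat_def by (simp add: App_def)
  also have "W * (App N a * App N (binv a)) = (W * App N a) * App N (binv a)"
    using W by (simp add: assoc_mult_mat[symmetric, OF W App_carrier App_carrier])
  also have "W * App N a = 1\<^sub>m (N+1)" using assms(3) d1 unfolding inverts_mat_def by simp
  also have "1\<^sub>m (N+1) * App N (binv a) = App N (binv a)" by (rule left_mult_one_mat[OF App_carrier])
  finally show ?thesis .
qed


lemma std_prob: "std_process M I X \<Longrightarrow> prob_space M"
  by (simp add: std_process_def)

lemma std_meas: "std_process M I X \<Longrightarrow> t \<in> I \<Longrightarrow> X t \<in> borel_measurable M"
  by (simp add: std_process_def)

lemma std_int: "std_process M I X \<Longrightarrow> t \<in> I \<Longrightarrow> integrable M (\<lambda>\<omega>. X t \<omega> ^ k)"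
  by (simp add: std_process_def)

lemma nat_filt_gen_sub:
  assumes "std_process M I X"
  shows "(\<Union>v\<in>{v\<in>I. v \<le> s}. sets (vimage_algebra (space M) (X v) borel)) \<subseteq> sets M"
proof -
  { fix v assume "v \<in> I"
    then have "X v \<in> borel_measurable M" using std_meas[OF assms] by auto
    then have "sets (vimage_algebra (space M) (X v) borel) \<subseteq> sets M"
      by (simp add: measurable_iff_sets sets_vimage_algebra) }
  then show ?thesis by auto
qed

lemma vimage_sets_sub: "x \<in> sets (vimage_algebra \<Omega> f N) \<Longrightarrow> x \<subseteq> \<Omega>"
  by (metis sets.sets_into_space space_vimage_algebra)

lemma sets_nat_filt:
  "sets (nat_filt M I X s) = sigma_sets (space M) (\<Union>v\<in>{v\<in>I. v \<le> s}. sets (vimage_algebra (space M) (X v) borel))"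
  unfolding nat_filt_def
  by (rule sets_measure_of) (auto dest: vimage_sets_sub)

lemma space_nat_filt: "space (nat_filt M I X s) = space M"
  unfolding nat_filt_def
  by (rule space_measure_of) (auto dest: vimage_sets_sub)

lemma nat_filt_sub: assumes "std_process M I X" shows "subalgebra M (nat_filt M I X s)"
  unfolding subalgebra_def
proof
  show "space (nat_filt M I X s) = space M" by (rule space_nat_filt)
  show "sets (nat_filt M I X s) \<subseteq> sets M" unfolding sets_nat_filt
    using nat_filt_gen_sub[OF assms] by (simp add: sets.sigma_sets_subset)
qed

lemma nat_filt_sfs: assumes "std_process M I X" shows "sigma_finite_subalgebra M (nat_filt M I X s)"
proof -
  interpret prob_space M using std_prob[OF assms] .
  have "finite_measure_subalgebra M (nat_filt M I X s)"
    by unfold_locales (rule nat_filt_sub[OF assms])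
  then show ?thesis by (rule finite_measure_subalgebra_is_sigma_finite)
qed

lemma X_meas_filt:
  assumes "std_process M I X" "v \<in> I" "v \<le> s"
  shows "X v \<in> borel_measurable (nat_filt M I X s)"
proof (rule measurableI)
  fix x assume "x \<in> space (nat_filt M I X s)" then show "X v x \<in> space borel" by simp
next
  fix A :: "real set" assume A: "A \<in> sets borel"
  have "X v -` A \<inter> space M \<in> sets (vimage_algebra (space M) (X v) borel)"
    using A by (auto simp: sets_vimage_algebra)
  then have "X v -` A \<inter> space M \<in> sigma_sets (space M) (\<Union>v\<in>{v\<in>I. v \<le> s}. sets (vimage_algebra (space M) (X v) borel))"
    using assms by (intro sigma_sets.Basic) auto
  then show "X v -` A \<inter> space (nat_filt M I X s) \<in> sets (nat_filt M I X s)"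
    by (simp add: space_nat_filt sets_nat_filt)
qed

lemma int_pp:
  assumes "std_process M I X" "t \<in> I" "s \<in> I"
  shows "integrable M (\<lambda>\<omega>. X t \<omega> ^ a * X s \<omega> ^ b)"
proof -
  have i: "integrable M (\<lambda>\<omega>. X t \<omega> ^ (2*a) + X s \<omega> ^ (2*b))"
    using std_int[OF assms(1,2)] std_int[OF assms(1,3)] by auto
  have m: "(\<lambda>\<omega>. X t \<omega> ^ a * X s \<omega> ^ b) \<in> borel_measurable M"
    using std_meas[OF assms(1,2)] std_meas[OF assms(1,3)] by measurable
  have ae: "AE \<omega> in M. norm (X t \<omega> ^ a * X s \<omega> ^ b) \<le> norm (X t \<omega> ^ (2*a) + X s \<omega> ^ (2*b))"
  proof (rule AE_I2)
    fix \<omega>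
    have p: "0 \<le> X t \<omega> ^ (2*a)" "0 \<le> X s \<omega> ^ (2*b)"
      by (simp_all add: power_mult)
    have "\<bar>X t \<omega> ^ a * X s \<omega> ^ b\<bar> \<le> X t \<omega> ^ (2*a) + X s \<omega> ^ (2*b)"
    proof -
      have "2 * \<bar>X t \<omega> ^ a\<bar> * \<bar>X s \<omega> ^ b\<bar> \<le> \<bar>X t \<omega> ^ a\<bar>^2 + \<bar>X s \<omega> ^ b\<bar>^2"
        using sum_squares_bound[of "\<bar>X t \<omega> ^ a\<bar>" "\<bar>X s \<omega> ^ b\<bar>"] by (simp add: power2_eq_square)
      moreover have "\<bar>X t \<omega> ^ a\<bar>^2 = X t \<omega> ^ (2*a)" "\<bar>X s \<omega> ^ b\<bar>^2 = X s \<omega> ^ (2*b)"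
        by (simp_all add: power_mult power_mult_distrib[symmetric] mult.commute[of 2])
      moreover have "0 \<le> \<bar>X t \<omega> ^ a\<bar> * \<bar>X s \<omega> ^ b\<bar>" by simp
      ultimately show ?thesis by (simp only: abs_mult)
    qed
    then show "norm (X t \<omega> ^ a * X s \<omega> ^ b) \<le> norm (X t \<omega> ^ (2*a) + X s \<omega> ^ (2*b))"
      using p by simp
  qed
  show ?thesis using Bochner_Integration.integrable_bound[OF i m ae] .
qed


lemma (in sigma_finite_subalgebra) ce_sum_mult:
  assumes "finite K" "\<And>k. k \<in> K \<Longrightarrow> Y k \<in> borel_measurable F"
    "\<And>k. k \<in> K \<Longrightarrow> integrable M (f k)" "\<And>k. k \<in> K \<Longrightarrow> integrable M (\<lambda>x. Y k x * f k x)"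
  shows "AE x in M. real_cond_exp M F (\<lambda>x. \<Sum>k\<in>K. Y k x * f k x) x = (\<Sum>k\<in>K. Y k x * real_cond_exp M F (f k) x)"
  using assms
proof (induction K rule: finite_induct)
  case empty
  have "AE x in M. real_cond_exp M F (\<lambda>x. 0) x = 0"
    by (rule real_cond_exp_F_meas) auto
  then show ?case by simp
next
  case (insert k K)
  have i1: "integrable M (\<lambda>x. Y k x * f k x)" using insert by auto
  have i2: "integrable M (\<lambda>x. \<Sum>k\<in>K. Y k x * f k x)" using insert by auto
  have a1: "AE x in M. real_cond_exp M F (\<lambda>x. Y k x * f k x + (\<Sum>k\<in>K. Y k x * f k x)) x
     = real_cond_exp M F (\<lambda>x. Y k x * f k x) x + real_cond_exp M F (\<lambda>x. \<Sum>k\<in>K. Y k x * f k x) x"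
    by (rule real_cond_exp_add[OF i1 i2])
  have a2: "AE x in M. real_cond_exp M F (\<lambda>x. Y k x * f k x) x = Y k x * real_cond_exp M F (f k) x"
    by (rule real_cond_exp_mult) (use insert in \<open>auto intro: borel_measurable_integrable\<close>)
  have a3: "AE x in M. real_cond_exp M F (\<lambda>x. \<Sum>k\<in>K. Y k x * f k x) x = (\<Sum>k\<in>K. Y k x * real_cond_exp M F (f k) x)"
    using insert by auto
  from a1 a2 a3 show ?case by eventually_elim (use insert(1,2) in simp)
qed

lemma int_poly2:
  assumes "std_process M I X" "t \<in> I" "s \<in> I"
  shows "integrable M (\<lambda>\<omega>. X s \<omega> ^ k * (X t \<omega> + c * X s \<omega>) ^ m)"
proof -
  have eq: "(\<lambda>\<omega>. X s \<omega> ^ k * (X t \<omega> + c * X s \<omega>) ^ m) =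
     (\<lambda>\<omega>. \<Sum>j=0..m. (real (m choose j) * c ^ (m - j)) * (X t \<omega> ^ j * (X s \<omega> ^ (m - j) * X s \<omega> ^ k)))"
  proof
    fix \<omega>
    have "(X t \<omega> + c * X s \<omega>) ^ m = (\<Sum>j=0..m. real (m choose j) * X t \<omega> ^ j * (c * X s \<omega>) ^ (m - j))"
      by (simp add: binomial_ring atLeast0AtMost)
    then show "X s \<omega> ^ k * (X t \<omega> + c * X s \<omega>) ^ m =
     (\<Sum>j=0..m. (real (m choose j) * c ^ (m - j)) * (X t \<omega> ^ j * (X s \<omega> ^ (m - j) * X s \<omega> ^ k)))"
      by (simp add: sum_distrib_left power_add power_mult_distrib ac_simps)
  qed
  have ij: "integrable M (\<lambda>\<omega>. X t \<omega> ^ j * (X s \<omega> ^ (m - j) * X s \<omega> ^ k))" for j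
  proof -
    have "(\<lambda>\<omega>. X t \<omega> ^ j * (X s \<omega> ^ (m - j) * X s \<omega> ^ k)) = (\<lambda>\<omega>. X t \<omega> ^ j * X s \<omega> ^ ((m - j) + k))"
      by (simp only: power_add)
    then show ?thesis using int_pp[OF assms, of j "(m - j) + k"] by simp
  qed
  show ?thesis unfolding eq
    using ij by (intro Bochner_Integration.integrable_sum Bochner_Integration.integrable_mult_right) auto
qed

lemma poly_unique:
  assumes "std_process M I X" "s \<in> I"
    and ae: "AE \<omega> in M. (\<Sum>j=0..n. a j * X s \<omega> ^ j) = (\<Sum>j=0..n. b j * X s \<omega> ^ j)"
    and "j \<le> n"
  shows "a j = b j"
proof -
  define p where "p = (\<Sum>j=0..n. monom (a j - b j) j)"
  have pv: "poly p x = (\<Sum>j=0..n. a j * x ^ j) - (\<Sum>j=0..n. b j * x ^ j)" for x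
    by (simp add: p_def poly_sum poly_monom sum_subtractf[symmetric] algebra_simps)
  have "p = 0"
  proof (rule ccontr)
    assume "p \<noteq> 0"
    then have fin: "finite {x. poly p x = 0}" by (rule poly_roots_finite)
    have "AE \<omega> in M. X s \<omega> \<in> {x. poly p x = 0}"
      using ae by eventually_elim (simp add: pv)
    then show False using assms(1,2) fin unfolding std_process_def by blast
  qed
  then have "coeff p j = 0" by simp
  moreover have "coeff p j = a j - b j"
    using \<open>j \<le> n\<close> by (simp add: p_def coeff_sum coeff_monom)
  ultimately show ?thesis by simp
qed


lemma alg1: "conv (\<lambda>k. (-x)^k) (conv (\<lambda>k. x^k) h) n = h n"
proof -
  have "conv (\<lambda>k. (-x)^k) (conv (\<lambda>k. x^k) h) n = conv (conv (\<lambda>k. (-x)^k) (\<lambda>k. x^k)) h n"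
    by (rule conv_assoc[symmetric])
  also have "\<dots> = conv dl h n"
  proof (rule conv_cong)
    fix k show "conv (\<lambda>k. (-x)^k) (\<lambda>k. x^k) k = dl k"
      unfolding conv_def dl_def using binomial_ring[of "-x" x k]
      by (cases "k = 0") (simp_all add: atLeast0AtMost ac_simps power_0_left)
  qed simp
  also have "\<dots> = h n" by (simp add: conv_comm[of dl] conv_dl)
  finally show ?thesis .
qed

lemma ce_C1:
  assumes std: "std_process M I X" and st: "s \<in> I" "t \<in> I" "s \<le> t"
    and cc: "\<And>k. k \<le> n \<Longrightarrow> AE \<omega> in M. real_cond_exp M (nat_filt M I X s) (\<lambda>\<omega>. (X t \<omega> - X s \<omega>)^k) \<omega> = cc k"
  shows "AE \<omega> in M. real_cond_exp M (nat_filt M I X s) (\<lambda>\<omega>. X t \<omega> ^ n) \<omega> = conv (\<lambda>k. X s \<omega> ^ k) cc n"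
proof -
  interpret sigma_finite_subalgebra M "nat_filt M I X s" by (rule nat_filt_sfs[OF std])
  have eq: "(\<lambda>\<omega>. X t \<omega> ^ n) = (\<lambda>\<omega>. \<Sum>k\<in>{0..n}. (real (n choose k) * X s \<omega> ^ k) * (X t \<omega> - X s \<omega>)^(n-k))"
  proof
    fix \<omega>
    have "X t \<omega> ^ n = (X s \<omega> + (X t \<omega> - X s \<omega>))^n" by simp
    also have "\<dots> = (\<Sum>k\<in>{0..n}. (real (n choose k) * X s \<omega> ^ k) * (X t \<omega> - X s \<omega>)^(n-k))"
      by (subst binomial_ring) (simp add: atLeast0AtMost)
    finally show "X t \<omega> ^ n = (\<Sum>k\<in>{0..n}. (real (n choose k) * X s \<omega> ^ k) * (X t \<omega> - X s \<omega>)^(n-k))" .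
  qed
  have fe: "(\<lambda>\<omega>. X s \<omega> ^ k * (X t \<omega> - X s \<omega>)^m) = (\<lambda>\<omega>. X s \<omega> ^ k * (X t \<omega> + (-1) * X s \<omega>)^m)" for k m
    by simp
  have ip: "integrable M (\<lambda>\<omega>. X s \<omega> ^ k * (X t \<omega> - X s \<omega>)^m)" for k m
    unfolding fe by (rule int_poly2[OF std st(2,1)])
  have if1: "integrable M (\<lambda>\<omega>. (X t \<omega> - X s \<omega>)^m)" for m
    using ip[of 0 m] by simp
  have a1: "AE \<omega> in M. real_cond_exp M (nat_filt M I X s) (\<lambda>\<omega>. \<Sum>k\<in>{0..n}. (real (n choose k) * X s \<omega> ^ k) * (X t \<omega> - X s \<omega>)^(n-k)) \<omega>
     = (\<Sum>k\<in>{0..n}. (real (n choose k) * X s \<omega> ^ k) * real_cond_exp M (nat_filt M I X s) (\<lambda>\<omega>. (X t \<omega> - X s \<omega>)^(n-k)) \<omega>)"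
  proof (rule ce_sum_mult)
    fix k show "(\<lambda>\<omega>. real (n choose k) * X s \<omega> ^ k) \<in> borel_measurable (nat_filt M I X s)"
      using X_meas_filt[OF std st(1) order_refl] by measurable
    show "integrable M (\<lambda>\<omega>. (X t \<omega> - X s \<omega>)^(n-k))" by (rule if1)
    show "integrable M (\<lambda>\<omega>. real (n choose k) * X s \<omega> ^ k * (X t \<omega> - X s \<omega>)^(n-k))"
      using ip[of k "n-k"] by (simp add: mult.assoc)
  qed simp
  have a2: "AE \<omega> in M. \<forall>k\<in>{0..n}. real_cond_exp M (nat_filt M I X s) (\<lambda>\<omega>. (X t \<omega> - X s \<omega>)^(n-k)) \<omega> = cc (n-k)"
    by (rule AE_finite_allI) (use cc in auto)
  from a1 a2 show ?thesis unfolding eq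
    by eventually_elim (simp add: conv_def ac_simps)
qed

lemma ce_C2:
  assumes std: "std_process M I X" and st: "s \<in> I" "t \<in> I" "s \<le> t"
    and h: "\<And>k. k \<le> n \<Longrightarrow> AE \<omega> in M. real_cond_exp M (nat_filt M I X s) (\<lambda>\<omega>. X t \<omega> ^ k) \<omega> = conv (\<lambda>k. X s \<omega> ^ k) h k"
  shows "AE \<omega> in M. real_cond_exp M (nat_filt M I X s) (\<lambda>\<omega>. (X t \<omega> - X s \<omega>)^n) \<omega> = h n"
proof -
  interpret sigma_finite_subalgebra M "nat_filt M I X s" by (rule nat_filt_sfs[OF std])
  have eq: "(\<lambda>\<omega>. (X t \<omega> - X s \<omega>)^n) = (\<lambda>\<omega>. \<Sum>k\<in>{0..n}. (real (n choose k) * (- X s \<omega>) ^ k) * X t \<omega> ^ (n-k))"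
  proof
    fix \<omega>
    have "(X t \<omega> - X s \<omega>)^n = (- X s \<omega> + X t \<omega>)^n" by simp
    also have "\<dots> = (\<Sum>k\<in>{0..n}. (real (n choose k) * (- X s \<omega>) ^ k) * X t \<omega> ^ (n-k))"
      by (subst binomial_ring) (simp add: atLeast0AtMost)
    finally show "(X t \<omega> - X s \<omega>)^n = (\<Sum>k\<in>{0..n}. (real (n choose k) * (- X s \<omega>) ^ k) * X t \<omega> ^ (n-k))" .
  qed
  have a1: "AE \<omega> in M. real_cond_exp M (nat_filt M I X s) (\<lambda>\<omega>. \<Sum>k\<in>{0..n}. (real (n choose k) * (- X s \<omega>) ^ k) * X t \<omega> ^ (n-k)) \<omega>
     = (\<Sum>k\<in>{0..n}. (real (n choose k) * (- X s \<omega>) ^ k) * real_cond_exp M (nat_filt M I X s) (\<lambda>\<omega>. X t \<omega> ^ (n-k)) \<omega>)"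
  proof (rule ce_sum_mult)
    fix k show "(\<lambda>\<omega>. real (n choose k) * (- X s \<omega>) ^ k) \<in> borel_measurable (nat_filt M I X s)"
      using X_meas_filt[OF std st(1) order_refl] by measurable
    show "integrable M (\<lambda>\<omega>. X t \<omega> ^ (n-k))" by (rule std_int[OF std st(2)])
    have fe: "(\<lambda>\<omega>. real (n choose k) * (- X s \<omega>) ^ k * X t \<omega> ^ (n-k)) = (\<lambda>\<omega>. (real (n choose k) * (-1)^k) * (X t \<omega> ^ (n-k) * X s \<omega> ^ k))"
      by (simp add: power_minus[of "X s _"] ac_simps)
    show "integrable M (\<lambda>\<omega>. real (n choose k) * (- X s \<omega>) ^ k * X t \<omega> ^ (n-k))"
      unfolding fe using int_pp[OF std st(2,1)] by (intro Bochner_Integration.integrable_mult_right) auto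
  qed simp
  have a2: "AE \<omega> in M. \<forall>k\<in>{0..n}. real_cond_exp M (nat_filt M I X s) (\<lambda>\<omega>. X t \<omega> ^ (n-k)) \<omega> = conv (\<lambda>k. X s \<omega> ^ k) h (n-k)"
    by (rule AE_finite_allI) (use h in auto)
  from a1 a2 show ?thesis unfolding eq
  proof eventually_elim
    case (elim \<omega>)
    then have "real_cond_exp M (nat_filt M I X s) (\<lambda>\<omega>. (\<Sum>k\<in>{0..n}. (real (n choose k) * (- X s \<omega>) ^ k) * X t \<omega> ^ (n-k))) \<omega>
      = conv (\<lambda>k. (- X s \<omega>)^k) (conv (\<lambda>k. X s \<omega> ^ k) h) n"
      by (simp add: conv_def)
    also have "\<dots> = h n" by (rule alg1)
    finally show ?case .
  qed
qed

lemma nat_filt_mono: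
  assumes "std_process M I X" "s \<le> t"
  shows "subalgebra (nat_filt M I X t) (nat_filt M I X s)"
  unfolding subalgebra_def sets_nat_filt space_nat_filt
  using assms(2) by (auto intro!: sigma_sets_mono')

lemma ce_expect:
  assumes std: "std_process M I X" and "integrable M f"
    and ae: "AE \<omega> in M. real_cond_exp M (nat_filt M I X s) f \<omega> = c"
  shows "c = (\<integral>\<omega>. f \<omega> \<partial>M)"
proof -
  interpret sigma_finite_subalgebra M "nat_filt M I X s" by (rule nat_filt_sfs[OF std])
  interpret prob_space M by (rule std_prob[OF std])
  have "(\<integral>\<omega>. f \<omega> \<partial>M) = (\<integral>\<omega>. real_cond_exp M (nat_filt M I X s) f \<omega> \<partial>M)"
    using real_cond_exp_int(2)[OF assms(2)] by simp
  also have "\<dots> = (\<integral>\<omega>. c \<partial>M)" by (rule integral_cong_AE) (use ae in auto)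
  also have "\<dots> = c" by (simp add: prob_space)
  finally show ?thesis by simp
qed


lemma stmt_mat_App:
  "Matrix.mat (N+1) (N+1) (\<lambda>(i,j). if i < j then 0 else if i = j then 1 else real (i choose j) * g (i - j) t)
   = App N (\<lambda>k. if k = 0 then 1 else g k t)"
  unfolding App_def by (rule cong_mat) auto

lemma ce_one:
  assumes std: "std_process M I X"
  shows "AE \<omega> in M. real_cond_exp M (nat_filt M I X s) (\<lambda>\<omega>. 1) \<omega> = 1"
proof -
  interpret sigma_finite_subalgebra M "nat_filt M I X s" by (rule nat_filt_sfs[OF std])
  interpret prob_space M by (rule std_prob[OF std])
  show ?thesis by (rule real_cond_exp_F_meas) auto
qed

lemma if_dir:
  assumes mpr: "MPR N M I X gamma"
    and sm: "structural_matrix N I gamma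
              (\<lambda>t. Matrix.mat (N+1) (N+1) (\<lambda>(i,j).
                  if i < j then 0 else if i = j then 1 else real (i choose j) * g (i - j) t))"
    and n: "0 < n" "n \<le> N" and st: "s \<in> I" "t \<in> I" "s < t"
  shows "\<exists>c::real. AE \<omega> in M.
               real_cond_exp M (nat_filt M I X s) (\<lambda>\<omega>. (X t \<omega> - X s \<omega>) ^ n) \<omega> = c"
proof -
  have std: "std_process M I X" using mpr by (simp add: MPR_def)
  define gs where "gs t = (\<lambda>k. if k = 0 then 1 else g k t)" for t
  have gs0: "gs t 0 = 1" for t by (simp add: gs_def)
  have sm': "structural_matrix N I gamma (\<lambda>t. App N (gs t))"
    using sm unfolding stmt_mat_App gs_def .
  define h where "h = conv (gs t) (binv (gs s))"
  have A: "A_mat N gamma s t = App N (gs t) * App N (binv (gs s))"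
    using sm' st App_inverts[of "gs s" N, OF gs0] unfolding structural_matrix_def by auto
  also have "\<dots> = App N h" by (simp add: App_mult h_def)
  finally have A': "A_mat N gamma s t = App N h" .
  have gam: "gamma k j s t = real (k choose j) * h (k - j)" if "1 \<le> k" "k \<le> N" "j \<le> k" for k j
  proof -
    have "A_mat N gamma s t $$ (k,j) = App N h $$ (k,j)" using A' by simp
    then show ?thesis using that by (simp add: A_mat_def App_def)
  qed
  have h0: "h 0 = 1" by (simp add: h_def conv_def gs0)
  have ce: "AE \<omega> in M. real_cond_exp M (nat_filt M I X s) (\<lambda>\<omega>. X t \<omega> ^ k) \<omega> = conv (\<lambda>k. X s \<omega> ^ k) h k"
    if "k \<le> n" for k
  proof (cases "k = 0")
    case True
    then show ?thesis using ce_one[OF std, of s] by (simp add: conv_def h0)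
  next
    case False
    have "AE \<omega> in M. real_cond_exp M (nat_filt M I X s) (\<lambda>\<omega>. X t \<omega> ^ k) \<omega> = (\<Sum>j=0..k. gamma k j s t * X s \<omega> ^ j)"
      using mpr st False that n unfolding MPR_def by auto
    moreover have "(\<Sum>j=0..k. gamma k j s t * x ^ j) = conv (\<lambda>k. x ^ k) h k" for x :: real
      unfolding conv_pw_poly using False that n by (intro sum.cong) (auto simp: gam)
    ultimately show ?thesis by simp
  qed
  have "AE \<omega> in M. real_cond_exp M (nat_filt M I X s) (\<lambda>\<omega>. (X t \<omega> - X s \<omega>)^n) \<omega> = h n"
    by (rule ce_C2[OF std st(1,2)]) (use st ce in auto)
  then show ?thesis by blast
qed


lemma comp_pair_r:
  assumes "continuous (at (t0,t0) within I \<times> I) f" "t0 \<in> I" "S \<subseteq> I"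
  shows "((\<lambda>t. f (t0,t)) \<longlongrightarrow> f (t0,t0)) (at t0 within S)"
proof -
  have fl: "filterlim (\<lambda>t. (t0,t)) (at (t0,t0) within I \<times> I) (at t0 within S)"
    unfolding filterlim_at
  proof
    show "\<forall>\<^sub>F t in at t0 within S. (t0, t) \<in> I \<times> I \<and> (t0, t) \<noteq> (t0, t0)"
      using assms(2,3) unfolding eventually_at_filter by (intro always_eventually) auto
    show "((\<lambda>t. (t0, t)) \<longlongrightarrow> (t0, t0)) (at t0 within S)"
      by (intro tendsto_intros)
  qed
  show ?thesis using filterlim_compose[OF assms(1)[unfolded continuous_within] fl] .
qed

lemma comp_pair_l:
  assumes "continuous (at (t0,t0) within I \<times> I) f" "t0 \<in> I" "S \<subseteq> I"
  shows "((\<lambda>t. f (t,t0)) \<longlongrightarrow> f (t0,t0)) (at t0 within S)"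
proof -
  have fl: "filterlim (\<lambda>t. (t,t0)) (at (t0,t0) within I \<times> I) (at t0 within S)"
    unfolding filterlim_at
  proof
    show "\<forall>\<^sub>F t in at t0 within S. (t, t0) \<in> I \<times> I \<and> (t, t0) \<noteq> (t0, t0)"
      using assms(2,3) unfolding eventually_at_filter by (intro always_eventually) auto
    show "((\<lambda>t. (t, t0)) \<longlongrightarrow> (t0, t0)) (at t0 within S)"
      by (intro tendsto_intros)
  qed
  show ?thesis using filterlim_compose[OF assms(1)[unfolded continuous_within] fl] .
qed

definition mm :: "'a measure \<Rightarrow> (real \<Rightarrow> 'a \<Rightarrow> real) \<Rightarrow> nat \<Rightarrow> real \<Rightarrow> real \<Rightarrow> real" where
  "mm M X n u v = (\<Sum>j=0..n. (real (n choose j) * (-1)^(n-j)) * (\<integral>\<omega>. X u \<omega> ^ (n-j) * X v \<omega> ^ j \<partial>M))"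

lemma mm_eq:
  assumes std: "std_process M I X" and "u \<in> I" "v \<in> I"
  shows "mm M X n u v = (\<integral>\<omega>. (X v \<omega> - X u \<omega>)^n \<partial>M)"
proof -
  have eq: "(\<lambda>\<omega>. (X v \<omega> - X u \<omega>)^n) = (\<lambda>\<omega>. \<Sum>j=0..n. (real (n choose j) * (-1)^(n-j)) * (X u \<omega> ^ (n-j) * X v \<omega> ^ j))"
  proof
    fix \<omega>
    have "(X v \<omega> - X u \<omega>)^n = (X v \<omega> + (- X u \<omega>))^n" by simp
    also have "\<dots> = (\<Sum>j=0..n. (real (n choose j) * (-1)^(n-j)) * (X u \<omega> ^ (n-j) * X v \<omega> ^ j))"
      by (subst binomial_ring) (simp add: atLeast0AtMost power_minus[of "X u _"] ac_simps)
    finally show "(X v \<omega> - X u \<omega>)^n = (\<Sum>j=0..n. (real (n choose j) * (-1)^(n-j)) * (X u \<omega> ^ (n-j) * X v \<omega> ^ j))" .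
  qed
  show ?thesis unfolding eq mm_def
    using int_pp[OF std assms(2,3)] by (subst Bochner_Integration.integral_sum) auto
qed

lemma mm_cont:
  assumes "MSC N M I X" "n \<le> N" "t \<in> I"
  shows "continuous (at (t,t) within I \<times> I) (\<lambda>x. mm M X n (fst x) (snd x))"
proof -
  have "(\<lambda>x. mm M X n (fst x) (snd x)) = (\<lambda>x. \<Sum>j=0..n. (real (n choose j) * (-1)^(n-j)) *
      (\<lambda>(u,v). \<integral>\<omega>. X u \<omega> ^ (n-j) * X v \<omega> ^ j \<partial>M) x)"
    by (auto simp: mm_def fun_eq_iff split: prod.splits)
  moreover have "continuous (at (t,t) within I \<times> I) (\<lambda>(u,v). \<integral>\<omega>. X u \<omega> ^ (n-j) * X v \<omega> ^ j \<partial>M)"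
    if "j \<le> n" for j
    using assms that unfolding MSC_def by auto
  ultimately show ?thesis
    by (simp only:) (intro continuous_sum continuous_mult continuous_const, auto)
qed

lemma mm_diag:
  assumes std: "std_process M I X" "t \<in> I"
  shows "mm M X n t t = dl n"
proof -
  interpret prob_space M by (rule std_prob[OF std(1)])
  have "mm M X n t t = (\<integral>\<omega>. (X t \<omega> - X t \<omega>)^n \<partial>M)" by (rule mm_eq[OF assms assms(2)])
  also have "\<dots> = dl n" by (cases "n = 0") (auto simp: dl_def prob_space)
  finally show ?thesis .
qed


context
  fixes M :: "'a measure" and I :: "real set" and X :: "real \<Rightarrow> 'a \<Rightarrow> real"
    and N :: nat and gamma :: "nat \<Rightarrow> nat \<Rightarrow> real \<Rightarrow> real \<Rightarrow> real"
  assumes mpr: "MPR N M I X gamma"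
    and L: "\<forall>n. 0 < n \<and> n \<le> N \<longrightarrow> (\<forall>s\<in>I. \<forall>t\<in>I. s < t \<longrightarrow>
            (\<exists>c::real. AE \<omega> in M.
               real_cond_exp M (nat_filt M I X s) (\<lambda>\<omega>. (X t \<omega> - X s \<omega>) ^ n) \<omega> = c))"
begin

lemma std: "std_process M I X" using mpr by (simp add: MPR_def)

definition cc :: "real \<Rightarrow> real \<Rightarrow> nat \<Rightarrow> real" where
  "cc s t n = (if n = 0 then 1 else if s = t then 0 else
     (SOME c. AE \<omega> in M. real_cond_exp M (nat_filt M I X s) (\<lambda>\<omega>. (X t \<omega> - X s \<omega>) ^ n) \<omega> = c))"

lemma cc0[simp]: "cc s t 0 = 1" by (simp add: cc_def)

lemma ccAE:
  assumes "s \<in> I" "t \<in> I" "s \<le> t" "n \<le> N"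
  shows "AE \<omega> in M. real_cond_exp M (nat_filt M I X s) (\<lambda>\<omega>. (X t \<omega> - X s \<omega>) ^ n) \<omega> = cc s t n"
proof (cases "n = 0")
  case True then show ?thesis using ce_one[OF std, of s] by (simp add: cc_def)
next
  case n: False
  show ?thesis
  proof (cases "s = t")
    case True
    interpret sigma_finite_subalgebra M "nat_filt M I X s" by (rule nat_filt_sfs[OF std])
    have "AE \<omega> in M. real_cond_exp M (nat_filt M I X s) (\<lambda>\<omega>. 0) \<omega> = 0"
      by (rule real_cond_exp_F_meas) auto
    then show ?thesis using True n by (simp add: cc_def power_0_left)
  next
    case False
    then have "s < t" using assms by simp
    then have "\<exists>c. AE \<omega> in M. real_cond_exp M (nat_filt M I X s) (\<lambda>\<omega>. (X t \<omega> - X s \<omega>) ^ n) \<omega> = c"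
      using L assms n by auto
    from someI_ex[OF this] show ?thesis using False n unfolding cc_def by simp
  qed
qed

lemma ce1:
  assumes "s \<in> I" "t \<in> I" "s \<le> t" "n \<le> N"
  shows "AE \<omega> in M. real_cond_exp M (nat_filt M I X s) (\<lambda>\<omega>. X t \<omega> ^ n) \<omega> = conv (\<lambda>k. X s \<omega> ^ k) (cc s t) n"
  by (rule ce_C1[OF std assms(1-3)]) (use assms ccAE in auto)

lemma gam:
  assumes "s \<in> I" "t \<in> I" "s \<le> t" "1 \<le> n" "n \<le> N" "j \<le> n"
  shows "gamma n j s t = real (n choose j) * cc s t (n - j)"
proof -
  have a1: "AE \<omega> in M. real_cond_exp M (nat_filt M I X s) (\<lambda>\<omega>. X t \<omega> ^ n) \<omega> = (\<Sum>j=0..n. gamma n j s t * X s \<omega> ^ j)"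
    using mpr assms unfolding MPR_def by auto
  have "AE \<omega> in M. (\<Sum>j=0..n. gamma n j s t * X s \<omega> ^ j) = (\<Sum>j=0..n. (real (n choose j) * cc s t (n - j)) * X s \<omega> ^ j)"
    using a1 ce1[OF assms(1-3,5)] by eventually_elim (simp add: conv_pw_poly)
  then show ?thesis by (rule poly_unique[OF std assms(1) _ assms(6)])
qed

lemma semi:
  assumes "s \<in> I" "t \<in> I" "u \<in> I" "s \<le> t" "t \<le> u" "n \<le> N"
  shows "cc s u n = conv (cc s t) (cc t u) n"
proof -
  interpret sigma_finite_subalgebra M "nat_filt M I X s" by (rule nat_filt_sfs[OF std])
  have su: "s \<le> u" using assms by simp
  define c where "c k = real (n choose k) * cc t u (n - k)" for k
  have a1: "AE \<omega> in M. real_cond_exp M (nat_filt M I X s) (\<lambda>\<omega>. X u \<omega> ^ n) \<omega> = conv (\<lambda>k. X s \<omega> ^ k) (cc s u) n"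
    by (rule ce1) (use assms in auto)
  have a2: "AE \<omega> in M. real_cond_exp M (nat_filt M I X t) (\<lambda>\<omega>. X u \<omega> ^ n) \<omega> = (\<Sum>k\<in>{0..n}. c k * X t \<omega> ^ k)"
    using ce1[of t u n, OF assms(2,3,5,6)] by eventually_elim (simp add: conv_def c_def ac_simps)
  have a3: "AE \<omega> in M. real_cond_exp M (nat_filt M I X s) (real_cond_exp M (nat_filt M I X t) (\<lambda>\<omega>. X u \<omega> ^ n)) \<omega>
       = real_cond_exp M (nat_filt M I X s) (\<lambda>\<omega>. X u \<omega> ^ n) \<omega>"
    by (rule real_cond_exp_nested_subalg) (use nat_filt_sub[OF std] nat_filt_mono[OF std assms(4)] std_int[OF std assms(3)] in auto)
  have a4: "AE \<omega> in M. real_cond_exp M (nat_filt M I X s) (real_cond_exp M (nat_filt M I X t) (\<lambda>\<omega>. X u \<omega> ^ n)) \<omega>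
       = real_cond_exp M (nat_filt M I X s) (\<lambda>\<omega>. \<Sum>k\<in>{0..n}. c k * X t \<omega> ^ k) \<omega>"
    by (rule real_cond_exp_cong[OF a2]) (use std_meas[OF std assms(2)] in auto)
  have a5: "AE \<omega> in M. real_cond_exp M (nat_filt M I X s) (\<lambda>\<omega>. \<Sum>k\<in>{0..n}. c k * X t \<omega> ^ k) \<omega>
       = (\<Sum>k\<in>{0..n}. c k * real_cond_exp M (nat_filt M I X s) (\<lambda>\<omega>. X t \<omega> ^ k) \<omega>)"
    by (rule ce_sum_mult) (use std_int[OF std assms(2)] in auto)
  have a6: "AE \<omega> in M. \<forall>k\<in>{0..n}. real_cond_exp M (nat_filt M I X s) (\<lambda>\<omega>. X t \<omega> ^ k) \<omega> = conv (\<lambda>k. X s \<omega> ^ k) (cc s t) k"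
    by (rule AE_finite_allI) (use ce1 assms in auto)
  have "AE \<omega> in M. conv (\<lambda>k. X s \<omega> ^ k) (cc s u) n = conv (\<lambda>k. X s \<omega> ^ k) (conv (cc s t) (cc t u)) n"
    using a1 a3 a4 a5 a6
  proof eventually_elim
    case (elim \<omega>)
    then have "conv (\<lambda>k. X s \<omega> ^ k) (cc s u) n = (\<Sum>k\<in>{0..n}. c k * conv (\<lambda>k. X s \<omega> ^ k) (cc s t) k)"
      by simp
    also have "\<dots> = conv (conv (\<lambda>k. X s \<omega> ^ k) (cc s t)) (cc t u) n"
      unfolding conv_def[of _ "cc t u"] c_def by (rule sum.cong) auto
    also have "\<dots> = conv (\<lambda>k. X s \<omega> ^ k) (conv (cc s t) (cc t u)) n" by (rule conv_assoc)
    finally show ?case .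
  qed
  then have "AE \<omega> in M. (\<Sum>j=0..n. (real (n choose j) * cc s u (n - j)) * X s \<omega> ^ j)
     = (\<Sum>j=0..n. (real (n choose j) * conv (cc s t) (cc t u) (n - j)) * X s \<omega> ^ j)"
    by (simp add: conv_pw_poly)
  from poly_unique[OF std assms(1) this, of 0] show ?thesis by simp
qed

lemma ccint:
  assumes "s \<in> I" "t \<in> I" "s \<le> t" "n \<le> N"
  shows "cc s t n = mm M X n s t"
proof -
  have "integrable M (\<lambda>\<omega>. (X t \<omega> - X s \<omega>)^n)"
    using int_poly2[OF std assms(2,1), of 0 "-1" n] by simp
  from ce_expect[OF std this ccAE[OF assms]] show ?thesis
    using mm_eq[OF std assms(1,2)] by simp
qed

lemma msc: "MSC N M I X" using mpr by (simp add: MPR_def)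

lemma lim_right:
  assumes "t0 \<in> I" "j \<le> N"
  shows "((\<lambda>t. cc t0 t j) \<longlongrightarrow> dl j) (at t0 within I \<inter> {t0..})"
proof -
  have "((\<lambda>t. mm M X j t0 t) \<longlongrightarrow> mm M X j t0 t0) (at t0 within I \<inter> {t0..})"
    using comp_pair_r[OF mm_cont[OF msc assms(2,1)] assms(1), of "I \<inter> {t0..}"] by simp
  then have "((\<lambda>t. mm M X j t0 t) \<longlongrightarrow> dl j) (at t0 within I \<inter> {t0..})"
    using mm_diag[OF std assms(1)] by simp
  moreover have "\<forall>\<^sub>F t in at t0 within I \<inter> {t0..}. mm M X j t0 t = cc t0 t j"
    unfolding eventually_at_filter using assms
    by (intro always_eventually) (auto simp: ccint)
  ultimately show ?thesis by (rule Lim_transform_eventually)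
qed

lemma lim_left:
  assumes "t0 \<in> I" "j \<le> N"
  shows "((\<lambda>t. cc t t0 j) \<longlongrightarrow> dl j) (at t0 within I \<inter> {..t0})"
proof -
  have "((\<lambda>t. mm M X j t t0) \<longlongrightarrow> mm M X j t0 t0) (at t0 within I \<inter> {..t0})"
    using comp_pair_l[OF mm_cont[OF msc assms(2,1)] assms(1), of "I \<inter> {..t0}"] by simp
  then have "((\<lambda>t. mm M X j t t0) \<longlongrightarrow> dl j) (at t0 within I \<inter> {..t0})"
    using mm_diag[OF std assms(1)] by simp
  moreover have "\<forall>\<^sub>F t in at t0 within I \<inter> {..t0}. mm M X j t t0 = cc t t0 j"
    unfolding eventually_at_filter using assms
    by (intro always_eventually) (auto simp: ccint)
  ultimately show ?thesis by (rule Lim_transform_eventually)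
qed

definition G :: "real \<Rightarrow> nat \<Rightarrow> real" where
  "G t = (if 0 \<le> t then cc 0 t else binv (cc t 0))"

lemma G0: "G t 0 = 1" by (simp add: G_def)

lemma Gstep:
  assumes I0: "0 \<in> I" and "s \<in> I" "u \<in> I" "s \<le> u" "n \<le> N"
  shows "G u n = conv (cc s u) (G s) n"
proof (cases "0 \<le> s")
  case True
  then have "G u n = cc 0 u n" "G s = cc 0 s" using assms by (auto simp: G_def)
  then show ?thesis using semi[OF I0 assms(2,3) True assms(4,5)] by (simp add: conv_comm)
next
  case s: False
  show ?thesis
  proof (cases "u < 0")
    case True
    then have Gu: "G u = binv (cc u 0)" and Gs: "G s = binv (cc s 0)" using s by (auto simp: G_def)
    have "conv (cc s u) (binv (cc s 0)) n = binv (cc u 0) n"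
    proof (rule binv_unique)
      fix k assume k: "k \<le> n"
      have "conv (conv (cc s u) (binv (cc s 0))) (cc u 0) k = conv (conv (binv (cc s 0)) (cc s u)) (cc u 0) k"
        by (rule conv_cong) (simp_all add: conv_comm[of "cc s u"])
      also have "\<dots> = conv (binv (cc s 0)) (conv (cc s u) (cc u 0)) k" by (rule conv_assoc)
      also have "\<dots> = conv (binv (cc s 0)) (cc s 0) k"
        by (rule conv_cong) (use semi[OF assms(2,3) I0 assms(4)] True k assms(5) in auto)
      also have "\<dots> = dl k" by (simp add: conv_binv_l)
      finally show "conv (conv (cc s u) (binv (cc s 0))) (cc u 0) k = dl k" .
    qed simp
    then show ?thesis by (simp add: Gu Gs)
  next
    case False
    then have Gu: "G u = cc 0 u" and Gs: "G s = binv (cc s 0)" using s by (auto simp: G_def)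
    have "conv (cc s u) (binv (cc s 0)) n = conv (conv (cc s 0) (cc 0 u)) (binv (cc s 0)) n"
      by (rule conv_cong) (use semi[OF assms(2) I0 assms(3)] s False assms(5) in auto)
    also have "\<dots> = conv (conv (cc 0 u) (cc s 0)) (binv (cc s 0)) n"
      by (rule conv_cong) (simp_all add: conv_comm[of "cc s 0"])
    also have "\<dots> = conv (cc 0 u) (conv (cc s 0) (binv (cc s 0))) n" by (rule conv_assoc)
    also have "\<dots> = conv (cc 0 u) dl n"
      by (rule conv_cong) (simp_all add: conv_binv)
    also have "\<dots> = cc 0 u n" by (rule conv_dl)
    finally show ?thesis by (simp add: Gu Gs)
  qed
qed

lemma Gcont:
  assumes I0: "0 \<in> I" and k: "k \<le> N"
  shows "continuous_on I (\<lambda>t. G t k)"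
  unfolding continuous_on_def
proof
  fix t0 assume t0: "t0 \<in> I"
  have R: "((\<lambda>t. G t k) \<longlongrightarrow> G t0 k) (at t0 within I \<inter> {t0..})"
  proof -
    have "((\<lambda>t. conv (cc t0 t) (G t0) k) \<longlongrightarrow> conv dl (G t0) k) (at t0 within I \<inter> {t0..})"
      by (rule conv_tendsto) (use lim_right t0 k in auto)
    moreover have "\<forall>\<^sub>F t in at t0 within I \<inter> {t0..}. conv (cc t0 t) (G t0) k = G t k"
      unfolding eventually_at_filter using t0 k
      by (intro always_eventually) (auto simp: Gstep[OF I0])
    ultimately have "((\<lambda>t. G t k) \<longlongrightarrow> conv dl (G t0) k) (at t0 within I \<inter> {t0..})"
      by (rule Lim_transform_eventually)
    then show ?thesis by (simp add: conv_dl_l)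
  qed
  have L: "((\<lambda>t. G t k) \<longlongrightarrow> G t0 k) (at t0 within I \<inter> {..t0})"
  proof -
    have l1: "((\<lambda>t. conv (binv (cc t t0)) (G t0) k) \<longlongrightarrow> conv (binv dl) (G t0) k) (at t0 within I \<inter> {..t0})"
      by (rule conv_tendsto, rule binv_tendsto) (use lim_left t0 k in auto)
    have e1: "conv (binv dl) (G t0) k = G t0 k"
      by (simp add: binv_dl[abs_def] conv_dl_l)
    have ev: "\<forall>\<^sub>F t in at t0 within I \<inter> {..t0}. conv (binv (cc t t0)) (G t0) k = G t k"
      unfolding eventually_at_filter
    proof (intro always_eventually allI impI)
      fix t assume t: "t \<in> I \<inter> {..t0}"
      have "conv (binv (cc t t0)) (G t0) k = conv (binv (cc t t0)) (conv (cc t t0) (G t)) k"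
        by (rule conv_cong) (use t t0 k Gstep[OF I0, of t t0] in auto)
      also have "\<dots> = conv (conv (binv (cc t t0)) (cc t t0)) (G t) k" by (simp add: conv_assoc)
      also have "\<dots> = conv dl (G t) k" by (rule conv_cong) (simp_all add: conv_binv_l)
      also have "\<dots> = G t k" by (rule conv_dl_l)
      finally show "conv (binv (cc t t0)) (G t0) k = G t k" .
    qed
    from Lim_transform_eventually[OF l1 ev] show ?thesis unfolding e1 .
  qed
  have "I = (I \<inter> {..t0}) \<union> (I \<inter> {t0..})" by auto
  then show "((\<lambda>t. G t k) \<longlongrightarrow> G t0 k) (at t0 within I)"
    using Lim_Un[OF L R] by simp
qed

lemma only_dir:
  assumes I0: "0 \<in> I"
  shows "\<exists>g :: nat \<Rightarrow> real \<Rightarrow> real.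
            (\<forall>k\<in>{1..N}. continuous_on I (g k) \<and> g k 0 = 0) \<and>
            structural_matrix N I gamma
              (\<lambda>t. Matrix.mat (N+1) (N+1) (\<lambda>(i,j).
                  if i < j then 0 else if i = j then 1 else real (i choose j) * g (i - j) t))"
proof (intro exI conjI)
  let ?g = "\<lambda>k t. G t k"
  show "\<forall>k\<in>{1..N}. continuous_on I (?g k) \<and> ?g k 0 = 0"
    using Gcont[OF I0] by (auto simp: G_def cc_def)
  have V: "(\<lambda>t. Matrix.mat (N+1) (N+1) (\<lambda>(i,j).
                  if i < j then 0 else if i = j then 1 else real (i choose j) * ?g (i - j) t))
     = (\<lambda>t. App N (G t))"
  proof
    fix t show "Matrix.mat (N+1) (N+1) (\<lambda>(i,j).
                  if i < j then 0 else if i = j then 1 else real (i choose j) * ?g (i - j) t) = App N (G t)"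
      unfolding App_def by (rule cong_mat) (auto simp: G0)
  qed
  show "structural_matrix N I gamma (\<lambda>t. Matrix.mat (N+1) (N+1) (\<lambda>(i,j).
                  if i < j then 0 else if i = j then 1 else real (i choose j) * ?g (i - j) t))"
    unfolding V structural_matrix_def
  proof (intro conjI ballI allI impI)
    fix t assume "t \<in> I"
    show "App N (G t) \<in> carrier_mat (N+1) (N+1)" by (rule App_carrier)
    show "invertible_mat (App N (G t))" by (rule App_invertible) (simp add: G0)
    show "lower_triangular (App N (G t))" by (rule App_lower)
  next
    fix s u W assume su: "s \<in> I" "u \<in> I" "s \<le> u"
      and W: "inverts_mat (App N (G s)) W \<and> inverts_mat W (App N (G s))"
    have W': "W = App N (binv (G s))" using App_W[of "G s" N W] W by (simp add: G0)
    have c: "conv (G u) (binv (G s)) m = cc s u m" if "m \<le> N" for m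
    proof -
      have "conv (G u) (binv (G s)) m = conv (conv (cc s u) (G s)) (binv (G s)) m"
        by (rule conv_cong) (use that su Gstep[OF I0 su] in auto)
      also have "\<dots> = conv (cc s u) (conv (G s) (binv (G s))) m" by (rule conv_assoc)
      also have "\<dots> = conv (cc s u) dl m" by (rule conv_cong) (simp_all add: conv_binv G0)
      finally show ?thesis by (simp add: conv_dl)
    qed
    have "App N (G u) * W = App N (conv (G u) (binv (G s)))" by (simp add: W' App_mult)
    also have "\<dots> = A_mat N gamma s u"
    proof (rule eq_matI)
      fix i j assume ij: "i < dim_row (A_mat N gamma s u)" "j < dim_col (A_mat N gamma s u)"
      then have iN: "i \<le> N" "j \<le> N" by (auto simp: A_mat_def)
      show "App N (conv (G u) (binv (G s))) $$ (i,j) = A_mat N gamma s u $$ (i,j)"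
        using iN c[of "i - j"] gam[OF su, of i j] by (auto simp: A_mat_def App_def)
    qed (auto simp: A_mat_def App_def)
    finally show "A_mat N gamma s u = App N (G u) * W" by simp
  qed
qed

end


theorem corollary3:
  fixes M :: "'a measure" and I :: "real set" and X :: "real \<Rightarrow> 'a \<Rightarrow> real"
    and N :: nat and gamma :: "nat \<Rightarrow> nat \<Rightarrow> real \<Rightarrow> real \<Rightarrow> real"
  assumes "MPR N M I X gamma" and "0 \<in> I"
  shows "(\<forall>n. 0 < n \<and> n \<le> N \<longrightarrow> (\<forall>s\<in>I. \<forall>t\<in>I. s < t \<longrightarrow>
            (\<exists>c::real. AE \<omega> in M.
               real_cond_exp M (nat_filt M I X s) (\<lambda>\<omega>. (X t \<omega> - X s \<omega>) ^ n) \<omega> = c)))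
     \<longleftrightarrow>
         (\<exists>g :: nat \<Rightarrow> real \<Rightarrow> real.
            (\<forall>k\<in>{1..N}. continuous_on I (g k) \<and> g k 0 = 0) \<and>
            structural_matrix N I gamma
              (\<lambda>t. Matrix.mat (N+1) (N+1) (\<lambda>(i,j).
                  if i < j then 0 else if i = j then 1 else real (i choose j) * g (i - j) t)))"
proof
  assume L: "\<forall>n. 0 < n \<and> n \<le> N \<longrightarrow> (\<forall>s\<in>I. \<forall>t\<in>I. s < t \<longrightarrow>
            (\<exists>c::real. AE \<omega> in M.
               real_cond_exp M (nat_filt M I X s) (\<lambda>\<omega>. (X t \<omega> - X s \<omega>) ^ n) \<omega> = c))"
  show "\<exists>g :: nat \<Rightarrow> real \<Rightarrow> real.
            (\<forall>k\<in>{1..N}. continuous_on I (g k) \<and> g k 0 = 0) \<and>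
            structural_matrix N I gamma
              (\<lambda>t. Matrix.mat (N+1) (N+1) (\<lambda>(i,j).
                  if i < j then 0 else if i = j then 1 else real (i choose j) * g (i - j) t))"
    by (rule only_dir[OF assms(1) L assms(2)])
next
  assume "\<exists>g :: nat \<Rightarrow> real \<Rightarrow> real.
            (\<forall>k\<in>{1..N}. continuous_on I (g k) \<and> g k 0 = 0) \<and>
            structural_matrix N I gamma
              (\<lambda>t. Matrix.mat (N+1) (N+1) (\<lambda>(i,j).
                  if i < j then 0 else if i = j then 1 else real (i choose j) * g (i - j) t))"
  then obtain g where sm: "structural_matrix N I gamma
              (\<lambda>t. Matrix.mat (N+1) (N+1) (\<lambda>(i,j).
                  if i < j then 0 else if i = j then 1 else real (i choose j) * g (i - j) t))"
    by blast
  show "\<forall>n. 0 < n \<and> n \<le> N \<longrightarrow> (\<forall>s\<in>I. \<forall>t\<in>I. s < t \<longrightarrow>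
            (\<exists>c::real. AE \<omega> in M.
               real_cond_exp M (nat_filt M I X s) (\<lambda>\<omega>. (X t \<omega> - X s \<omega>) ^ n) \<omega> = c))"
    using if_dir[OF assms(1) sm] by blast
qed

end
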